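(* In the qubit setting of the context, the optimal value of (AD) is $F_e=\frac12+\frac12\sqrt{1-\big(\sin(2\alpha)\cos(2n\alpha)\big)^2}.$
   Context: Fix an integer $n\ge1$ and real $\alpha$ with $0<\alpha<\pi/(4n)$. On $\mathbb{C}^2$ with computational basis $\{|0\rangle,|1\rangle\}$ let $|+\rangle=(|0\rangle+|1\rangle)/\sqrt2$, $U_0=e^{i\alpha}|0\rangle\langle0|+e^{-i\alpha}|1\rangle\langle1|$, $U_1=e^{-i\alpha}|0\rangle\langle0|+e^{i\alpha}|1\rangle\langle1|$, $|\psi^*_{n,i}\rangle=(U_i^* )^n|+\rangle$ (complex conjugation in the computational basis). For $A=\sum_{ij}A_{ij}|i\rangle\langle j|$ set $|A\rangle\!\rangle:=\sum_{ij}A_{ij}|j\rangle|i\rangle$. Systems $\mathcal H_0$ (memory), $\mathcal H_1$ (input), $\mathcal H_2$ (output) are copies of $\mathbb{C}^2$. The Choi operator of a linear map $\mathcal R:L(\mathcal H_0\otimes\mathcal H_1)\to L(\mathcal H_2)$ is $R=(\mathcal I\otimes\mathcal R)(|I\rangle\!\rangle\langle\!\langle I|)$. Let $D=\frac18\sum_{i=0,1}|\psi^*_{n,i}\rangle\langle\psi^*_{n,i}|\otimes|U_i\rangle\!\rangle\langle\!\langle U_i|$. Problem (AD): maximize $\mathrm{Tr}[RD]$ over $R\ge0$ with $\mathrm{Tr}_2R=I$. For a retrieval channel $\mathcal R$ with memory states $|\psi_{n,i}\rangle=U_i^n|+\rangle$, $\mathrm{Tr}[RD]$ equals the average over $i=0,1$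 of the process fidelity $\frac14\langle\!\langle U_i|X_i|U_i\rangle\!\rangle$, where $X_i$ is the Choi operator of $\xi\mapsto\mathcal R(|\psi_{n,i}\rangle\langle\psi_{n,i}|\otimes\xi)$. *)

theory Defs
  imports Complex_Main "HOL-Library.Complex_Order"
begin

text \<open>Qubit operators are functions nat => nat => complex, meaningful on
indices below 2. Operators on H0 (x) H1 (x) H2 are functions nat => nat => complex,
meaningful on indices below 8, where the basis vector |a0>|a1>|a2> has index
4*a0 + 2*a1 + a2 (H0 most significant). Vectors on H1 (x) H2 use index 2*a1 + a2.\<close>

definition mmult2 :: "(nat \<Rightarrow> nat \<Rightarrow> complex) \<Rightarrow> (nat \<Rightarrow> nat \<Rightarrow> complex) \<Rightarrow> nat \<Rightarrow> nat \<Rightarrow> complex" where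
  "mmult2 A B = (\<lambda>a b. \<Sum>k<2. A a k * B k b)"

definition id2 :: "nat \<Rightarrow> nat \<Rightarrow> complex" where
  "id2 = (\<lambda>a b. if a = b then 1 else 0)"

fun mpow2 :: "(nat \<Rightarrow> nat \<Rightarrow> complex) \<Rightarrow> nat \<Rightarrow> nat \<Rightarrow> nat \<Rightarrow> complex" where
  "mpow2 A 0 = id2"
| "mpow2 A (Suc m) = mmult2 A (mpow2 A m)"

definition conj_mat :: "(nat \<Rightarrow> nat \<Rightarrow> complex) \<Rightarrow> nat \<Rightarrow> nat \<Rightarrow> complex" where
  "conj_mat A = (\<lambda>a b. cnj (A a b))"

definition Uop :: "real \<Rightarrow> nat \<Rightarrow> nat \<Rightarrow> nat \<Rightarrow> complex" where
  "Uop \<alpha> i = (\<lambda>a b. if a = b then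
      (if (a = 0) = (i = 0) then exp (\<i> * of_real \<alpha>) else exp (- \<i> * of_real \<alpha>)) else 0)"

definition plus_state :: "nat \<Rightarrow> complex" where
  "plus_state = (\<lambda>b. of_real (1 / sqrt 2))"

definition psi_star :: "real \<Rightarrow> nat \<Rightarrow> nat \<Rightarrow> nat \<Rightarrow> complex" where
  "psi_star \<alpha> n i = (\<lambda>a. \<Sum>b<2. mpow2 (conj_mat (Uop \<alpha> i)) n a b * plus_state b)"

text \<open>|A>> = sum_{ij} A_ij |j>|i>; the component at |j>|i> (index 2*j+i) is A_ij.\<close>
definition vecop :: "(nat \<Rightarrow> nat \<Rightarrow> complex) \<Rightarrow> nat \<Rightarrow> complex" where
  "vecop A = (\<lambda>k. A (k mod 2) (k div 2))"

text \<open>D = 1/8 sum_i |psi*_{n,i}><psi*_{n,i}| (x) |U_i>><<U_i|.\<close>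
definition Dop :: "real \<Rightarrow> nat \<Rightarrow> nat \<Rightarrow> nat \<Rightarrow> complex" where
  "Dop \<alpha> n = (\<lambda>r c. (1/8) * (\<Sum>i<2.
      psi_star \<alpha> n i (r div 4) * cnj (psi_star \<alpha> n i (c div 4)) *
      vecop (Uop \<alpha> i) (r mod 4) * cnj (vecop (Uop \<alpha> i) (c mod 4))))"

text \<open>Positive semidefinite 8x8 operator (complex order: 0 <= z iff z real and nonnegative).\<close>
definition psd8 :: "(nat \<Rightarrow> nat \<Rightarrow> complex) \<Rightarrow> bool" where
  "psd8 R \<longleftrightarrow> (\<forall>v :: nat \<Rightarrow> complex. 0 \<le> (\<Sum>i<8. \<Sum>j<8. cnj (v i) * R i j * v j))"

definition ptrace2 :: "(nat \<Rightarrow> nat \<Rightarrow> complex) \<Rightarrow> nat \<Rightarrow> nat \<Rightarrow> complex" where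
  "ptrace2 R = (\<lambda>x y. \<Sum>k<2. R (2*x + k) (2*y + k))"

definition AD_feasible :: "(nat \<Rightarrow> nat \<Rightarrow> complex) \<Rightarrow> bool" where
  "AD_feasible R \<longleftrightarrow> psd8 R \<and> (\<forall>x<4. \<forall>y<4. ptrace2 R x y = (if x = y then 1 else 0))"

definition tr8 :: "(nat \<Rightarrow> nat \<Rightarrow> complex) \<Rightarrow> (nat \<Rightarrow> nat \<Rightarrow> complex) \<Rightarrow> complex" where
  "tr8 R D = (\<Sum>i<8. \<Sum>j<8. R i j * D j i)"

end

theory Submission imports Defs begin


definition B8 :: "(nat\<Rightarrow>nat\<Rightarrow>complex) \<Rightarrow> (nat\<Rightarrow>complex) \<Rightarrow> (nat\<Rightarrow>complex) \<Rightarrow> complex" where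
 "B8 R x y = (\<Sum>i<8. \<Sum>j<8. cnj (x i) * R i j * y j)"

definition Gf :: "real \<Rightarrow> real \<Rightarrow> real \<Rightarrow> (nat\<Rightarrow>complex) \<Rightarrow> (nat\<Rightarrow>complex) \<Rightarrow> nat \<Rightarrow> nat \<Rightarrow> complex" where
 "Gf g11 g12 g22 x y = (\<lambda>i j. of_real g11 * (x i * cnj (x j)) + of_real g12 * (x i * cnj (y j) + y i * cnj (x j)) + of_real g22 * (y i * cnj (y j)))"

lemma tr8_Gf: "tr8 R (Gf g11 g12 g22 x y) = of_real g11 * B8 R x x + of_real g12 * (B8 R y x + B8 R x y) + of_real g22 * B8 R y y"
proof -
  have e: "\<And>i j. R i j * Gf g11 g12 g22 x y j i = of_real g11 * (cnj (x i) * R i j * x j) + (of_real g12 * (cnj (y i) * R i j * x j) + of_real g12 * (cnj (x i) * R i j * y j)) + of_real g22 * (cnj (y i) * R i j * y j)"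
    by (simp add: Gf_def algebra_simps)
  show ?thesis unfolding tr8_def B8_def e
    by (simp only: sum.distrib sum_distrib_left distrib_left)
qed

lemma tr8_add: "tr8 R (\<lambda>i j. M i j + N i j) = tr8 R M + tr8 R N"
  unfolding tr8_def by (simp only: sum.distrib distrib_left)

lemma tr8_cong: "(\<And>i j. i < 8 \<Longrightarrow> j < 8 \<Longrightarrow> M i j = N i j) \<Longrightarrow> tr8 R M = tr8 R N"
  unfolding tr8_def by (intro sum.cong refl) auto

lemma B8_lin1: "B8 R (\<lambda>i. of_real a * x i + of_real b * y i) z = of_real a * B8 R x z + of_real b * B8 R y z"
proof -
  have e: "\<And>i j. cnj (of_real a * x i + of_real b * y i) * R i j * z j = of_real a * (cnj (x i) * R i j * z j) + of_real b * (cnj (y i) * R i j * z j)"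
    by (simp add: algebra_simps)
  show ?thesis unfolding B8_def e by (simp only: sum.distrib sum_distrib_left)
qed

lemma B8_lin2: "B8 R z (\<lambda>i. of_real a * x i + of_real b * y i) = of_real a * B8 R z x + of_real b * B8 R z y"
proof -
  have e: "\<And>i j. cnj (z i) * R i j * (of_real a * x j + of_real b * y j) = of_real a * (cnj (z i) * R i j * x j) + of_real b * (cnj (z i) * R i j * y j)"
    by (simp add: algebra_simps)
  show ?thesis unfolding B8_def e by (simp only: sum.distrib sum_distrib_left)
qed

lemma psd8_Re: "psd8 R \<Longrightarrow> 0 \<le> Re (B8 R v v)"
proof -
  assume "psd8 R"
  then have "0 \<le> B8 R v v" unfolding psd8_def B8_def by blast
  then show ?thesis by (simp add: less_eq_complex_def)
qed

lemma Gf_nonneg: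
  assumes "psd8 R" "0 \<le> g11" "0 \<le> g22" "g12^2 \<le> g11 * g22"
  shows "0 \<le> Re (tr8 R (Gf g11 g12 g22 x y))"
proof (cases "g11 = 0")
  case True
  then have "g12 = 0" using assms(4) by simp
  then show ?thesis using True assms(3) psd8_Re[OF assms(1), of y] by (simp add: tr8_Gf)
next
  case False
  then have g: "g11 > 0" using assms by simp
  have e: "B8 R (\<lambda>i. of_real g11 * x i + of_real g12 * y i) (\<lambda>i. of_real g11 * x i + of_real g12 * y i)
     = of_real g11 * (of_real g11 * B8 R x x + of_real g12 * B8 R x y) + of_real g12 * (of_real g11 * B8 R y x + of_real g12 * B8 R y y)"
    by (simp only: B8_lin1 B8_lin2)
  have h1: "0 \<le> g11 * (g11 * Re (B8 R x x) + g12 * Re (B8 R x y)) + g12 * (g11 * Re (B8 R y x) + g12 * Re (B8 R y y))"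
    using psd8_Re[OF assms(1), of "\<lambda>i. of_real g11 * x i + of_real g12 * y i"] unfolding e by simp
  have h2: "0 \<le> (g11*g22 - g12^2) * Re (B8 R y y)"
    using psd8_Re[OF assms(1), of y] assms(4) by simp
  have "Re (tr8 R (Gf g11 g12 g22 x y)) = g11 * Re (B8 R x x) + g12 * (Re (B8 R y x) + Re (B8 R x y)) + g22 * Re (B8 R y y)"
    by (simp add: tr8_Gf)
  then have "g11 * Re (tr8 R (Gf g11 g12 g22 x y)) = (g11 * (g11 * Re (B8 R x x) + g12 * Re (B8 R x y)) + g12 * (g11 * Re (B8 R y x) + g12 * Re (B8 R y y))) + (g11*g22 - g12^2) * Re (B8 R y y)"
    by (simp add: algebra_simps power2_eq_square)
  then have "0 \<le> g11 * Re (tr8 R (Gf g11 g12 g22 x y))" using h1 h2 by linarith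
  then show ?thesis using g by (simp add: zero_le_mult_iff)
qed

definition supp :: "nat \<Rightarrow> bool" where "supp r \<longleftrightarrow> (r = 0 \<or> r = 3 \<or> r = 4 \<or> r = 7)"
definition thf :: "real \<Rightarrow> real \<Rightarrow> nat \<Rightarrow> real" where
  "thf p q r = (if r = 0 then q - p else if r = 3 then -(p+q) else if r = 4 then p+q else p - q)"

lemma mpow2_diag: "a < 2 \<Longrightarrow> b < 2 \<Longrightarrow> mpow2 (\<lambda>x y. if x = y then d x else 0) m a b = (if a = b then d a ^ m else 0)"
proof (induction m arbitrary: a b)
  case 0
  then show ?case by (simp add: id2_def)
next
  case (Suc m)
  have s: "(\<Sum>k<2. f k) = f 0 + f (1::nat)" for f :: "nat \<Rightarrow> complex"
    by (simp add: numeral_2_eq_2)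
  show ?case using Suc.prems
    by (simp add: mmult2_def s Suc.IH) (auto simp: less_2_cases_iff)
qed

lemma exp_cis1: "exp (\<i> * complex_of_real x) = cis x" by (simp add: cis_conv_exp)
lemma exp_cis2: "exp (- \<i> * complex_of_real x) = cis (- x)" by (simp add: cis_conv_exp)
lemma exp_cis3: "exp (- (\<i> * complex_of_real x)) = cis (- x)" by (simp add: cis_conv_exp)
lemma sq2c: "complex_of_real (sqrt 2) * complex_of_real (sqrt 2) = 2"
  by (simp flip: of_real_mult)

lemma conj_Uop: "conj_mat (Uop \<alpha> i) = (\<lambda>x y. if x = y then (if (x = 0) = (i = 0) then cis (-\<alpha>) else cis \<alpha>) else 0)"
  by (auto simp: conj_mat_def Uop_def fun_eq_iff exp_cis1 exp_cis2 exp_cis3 cis_cnj)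

lemma psi_vals:
  "psi_star \<alpha> n 0 0 = cis (- (real n * \<alpha>)) * of_real (1 / sqrt 2)"
  "psi_star \<alpha> n 0 (Suc 0) = cis (real n * \<alpha>) * of_real (1 / sqrt 2)"
  "psi_star \<alpha> n (Suc 0) 0 = cis (real n * \<alpha>) * of_real (1 / sqrt 2)"
  "psi_star \<alpha> n (Suc 0) (Suc 0) = cis (- (real n * \<alpha>)) * of_real (1 / sqrt 2)"
proof -
  have s: "(\<Sum>k<2. f k) = f 0 + f (1::nat)" for f :: "nat \<Rightarrow> complex"
    by (simp add: numeral_2_eq_2)
  show "psi_star \<alpha> n 0 0 = cis (- (real n * \<alpha>)) * of_real (1 / sqrt 2)"
    unfolding psi_star_def conj_Uop s by (simp add: mpow2_diag plus_state_def DeMoivre)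
  show "psi_star \<alpha> n 0 (Suc 0) = cis (real n * \<alpha>) * of_real (1 / sqrt 2)"
    unfolding psi_star_def conj_Uop s by (simp add: mpow2_diag plus_state_def DeMoivre)
  show "psi_star \<alpha> n (Suc 0) 0 = cis (real n * \<alpha>) * of_real (1 / sqrt 2)"
    unfolding psi_star_def conj_Uop s by (simp add: mpow2_diag plus_state_def DeMoivre)
  show "psi_star \<alpha> n (Suc 0) (Suc 0) = cis (- (real n * \<alpha>)) * of_real (1 / sqrt 2)"
    unfolding psi_star_def conj_Uop s by (simp add: mpow2_diag plus_state_def DeMoivre)
qed

definition vv :: "real \<Rightarrow> nat \<Rightarrow> nat \<Rightarrow> nat \<Rightarrow> complex" where
  "vv \<alpha> n i r = psi_star \<alpha> n i (r div 4) * vecop (Uop \<alpha> i) (r mod 4)"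

lemma Dop_vv: "Dop \<alpha> n r c = 1/8 * (vv \<alpha> n 0 r * cnj (vv \<alpha> n 0 c) + vv \<alpha> n 1 r * cnj (vv \<alpha> n 1 c))"
proof -
  have s: "(\<Sum>k<2. f k) = f 0 + f (1::nat)" for f :: "nat \<Rightarrow> complex"
    by (simp add: numeral_2_eq_2)
  show ?thesis unfolding Dop_def s vv_def by (simp add: mult_ac)
qed

lemma vv_vals:
  assumes "r < 8"
  shows "vv \<alpha> n 0 r = (if supp r then of_real (1 / sqrt 2) * cis (thf (real n * \<alpha>) \<alpha> r) else 0)"
    and "vv \<alpha> n 1 r = cnj (vv \<alpha> n 0 r)"
proof -
  have "r = 0 \<or> r = 1 \<or> r = 2 \<or> r = 3 \<or> r = 4 \<or> r = 5 \<or> r = 6 \<or> r = 7" using assms by auto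
  then have "vv \<alpha> n 0 r = (if supp r then of_real (1 / sqrt 2) * cis (thf (real n * \<alpha>) \<alpha> r) else 0)
    \<and> vv \<alpha> n 1 r = cnj (vv \<alpha> n 0 r)"
    by (elim disjE) (simp_all add: vv_def psi_vals vecop_def Uop_def supp_def thf_def exp_cis1 exp_cis2 exp_cis3 cis_mult cis_cnj algebra_simps)
  then show "vv \<alpha> n 0 r = (if supp r then of_real (1 / sqrt 2) * cis (thf (real n * \<alpha>) \<alpha> r) else 0)"
    and "vv \<alpha> n 1 r = cnj (vv \<alpha> n 0 r)" by auto
qed

lemma Dop_eq:
  assumes "r < 8" "c < 8"
  shows "Dop \<alpha> n r c = (if supp r \<and> supp c then of_real (cos (thf (real n * \<alpha>) \<alpha> r - thf (real n * \<alpha>) \<alpha> c) / 8) else 0)"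
proof -
  have e: "Dop \<alpha> n r c = 1/8 * (vv \<alpha> n 0 r * cnj (vv \<alpha> n 0 c) + cnj (vv \<alpha> n 0 r * cnj (vv \<alpha> n 0 c)))"
    unfolding Dop_vv vv_vals(2)[OF assms(1)] vv_vals(2)[OF assms(2)] by simp
  show ?thesis unfolding e complex_add_cnj vv_vals(1)[OF assms(1)] vv_vals(1)[OF assms(2)]
    by (simp add: cis_cnj cis_mult power2_eq_square cos_diff sq2c)
qed

definition Tt :: "real \<Rightarrow> real \<Rightarrow> real \<Rightarrow> nat \<Rightarrow> nat \<Rightarrow> real" where
  "Tt a b P r c = (if r = c then 1
    else if (r=0\<and>c=4)\<or>(r=4\<and>c=0)\<or>(r=3\<and>c=7)\<or>(r=7\<and>c=3) then P
    else if (r=0\<and>c=3)\<or>(r=3\<and>c=0)\<or>(r=4\<and>c=7)\<or>(r=7\<and>c=4) then a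
    else if (r=0\<and>c=7)\<or>(r=7\<and>c=0) then a*P+b
    else a*P-b)"

definition GfR :: "real \<Rightarrow> real \<Rightarrow> real \<Rightarrow> (nat\<Rightarrow>real) \<Rightarrow> (nat\<Rightarrow>real) \<Rightarrow> nat \<Rightarrow> nat \<Rightarrow> real" where
 "GfR g11 g12 g22 x y = (\<lambda>i j. g11 * (x i * x j) + g12 * (x i * y j + y i * x j) + g22 * (y i * y j))"

definition evR :: "nat \<Rightarrow> nat \<Rightarrow> real" where "evR k = (\<lambda>i. if i = k then 1 else 0)"

definition Y4 :: "real \<Rightarrow> real \<Rightarrow> real \<Rightarrow> real \<Rightarrow> nat \<Rightarrow> nat \<Rightarrow> real" where
  "Y4 a b P S x y = (if x mod 2 \<noteq> y mod 2 then 0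
     else if x = y then (if (x = 0 \<or> x = 3) then (S + S*S + b*a*P)/(8*S) else (S + S*S - b*a*P)/(8*S))
     else P*(S + a*a)/(8*S))"

definition YfR :: "real \<Rightarrow> real \<Rightarrow> real \<Rightarrow> real \<Rightarrow> nat \<Rightarrow> nat \<Rightarrow> real" where
  "YfR a b P S i j = (if i mod 2 = j mod 2 then Y4 a b P S (i div 2) (j div 2) else 0)"

definition DTR :: "real \<Rightarrow> real \<Rightarrow> real \<Rightarrow> nat \<Rightarrow> nat \<Rightarrow> real" where
  "DTR a b P i j = (if supp i \<and> supp j then Tt a b P i j / 8 else 0)"

definition f1R where "f1R a b S = (\<lambda>i::nat. if i = 0 then -a/S else if i = 4 then b/S else if i = 3 then 1 else (0::real))"
definition f2R where "f2R a b S = (\<lambda>i::nat. if i = 0 then -b/S else if i = 4 then -a/S else if i = 7 then 1 else (0::real))"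
definition h1R where "h1R a b S = (\<lambda>i::nat. if i = 1 then a/S else if i = 5 then -b/S else (0::real))"
definition h2R where "h2R a b S = (\<lambda>i::nat. if i = 1 then b/S else if i = 5 then a/S else (0::real))"

lemma certR_all:
  fixes a b P S :: real
  assumes S: "S > 0" and hS: "S*S = a*a + b*b"
  shows "\<forall>i\<in>{0,1,2,3,4,5,6,7::nat}. \<forall>j\<in>{0,1,2,3,4,5,6,7::nat}. YfR a b P S i j = DTR a b P i j
     + GfR ((S*S - b*a*P)/(8*S)) (P*a*a/(8*S)) ((S*S + b*a*P)/(8*S)) (f1R a b S) (f2R a b S) i j
     + GfR (1/8) (P/8) (1/8) (evR 1) (evR 5) i j
     + GfR ((S*S - b*a*P)/(8*S)) (P*a*a/(8*S)) ((S*S + b*a*P)/(8*S)) (h1R a b S) (h2R a b S) i j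
     + GfR (1/8) (P/8) (1/8) (evR 2) (evR 6) i j
     + GfR ((S*S - b*a*P)/(8*S)) (P*a*a/(8*S)) ((S*S + b*a*P)/(8*S)) (evR 2) (evR 6) i j"
proof -
  have Sn: "S \<noteq> 0" using S by simp
  show ?thesis
    apply (simp only: ball_simps)
    apply (intro conjI)
    apply (simp_all add: YfR_def Y4_def DTR_def supp_def Tt_def GfR_def evR_def f1R_def f2R_def h1R_def h2R_def)
    apply (simp_all add: field_simps Sn)
    apply (use hS in algebra)+
    done
qed


lemma cos_tab:
  assumes "supp r" "supp c"
  shows "cos (thf p q r - thf p q c) = Tt (cos (2*q)) (sin (2*p) * sin (2*q)) (cos (2*p)) r c"
proof -
  have sp: "sin p ^ 2 + cos p ^ 2 = 1" and sq: "sin q ^ 2 + cos q ^ 2 = 1" by simp_all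
  from assms show ?thesis
    unfolding supp_def
    apply (elim disjE)
    apply (simp_all add: thf_def Tt_def cos_diff cos_add sin_diff sin_add cos_double sin_double)
    done
qed

lemma Gf_ofreal: "Gf g11 g12 g22 (\<lambda>i. of_real (x i)) (\<lambda>i. of_real (y i)) i j = of_real (GfR g11 g12 g22 x y i j)"
  by (simp add: Gf_def GfR_def)

lemma sum8: "(\<Sum>i<8. (f :: nat \<Rightarrow> _) i) = f 0 + f 1 + f 2 + f 3 + f 4 + f 5 + f 6 + (f 7 :: 'a :: comm_monoid_add)"
  by (simp add: eval_nat_numeral add.assoc)
lemma sum4: "(\<Sum>i<4. (f :: nat \<Rightarrow> _) i) = f 0 + f 1 + f 2 + (f 3 :: 'a :: comm_monoid_add)"
  by (simp add: eval_nat_numeral add.assoc)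
lemma sum2: "(\<Sum>i<2. (f :: nat \<Rightarrow> _) i) = f 0 + (f 1 :: 'a :: comm_monoid_add)"
  by (simp add: eval_nat_numeral)

lemma trY: "tr8 R (\<lambda>i j. of_real (YfR a b P S i j)) = (\<Sum>x<4. \<Sum>y<4. ptrace2 R x y * of_real (Y4 a b P S y x))"
  unfolding tr8_def ptrace2_def sum8 sum4 sum2
  by (simp add: YfR_def) (simp add: numeral_eq_Suc algebra_simps)

lemma trY_feas:
  assumes "AD_feasible R" "S > 0"
  shows "tr8 R (\<lambda>i j. of_real (YfR a b P S i j)) = of_real ((1 + S) / 2)"
proof -
  have f: "\<And>x y. x < 4 \<Longrightarrow> y < 4 \<Longrightarrow> ptrace2 R x y = (if x = y then 1 else 0)"
    using assms(1) unfolding AD_feasible_def by blast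
  have "tr8 R (\<lambda>i j. of_real (YfR a b P S i j)) = of_real (Y4 a b P S 0 0 + Y4 a b P S 1 1 + Y4 a b P S 2 2 + Y4 a b P S 3 3)"
    unfolding trY sum4 by (simp add: f)
  also have "Y4 a b P S 0 0 + Y4 a b P S 1 1 + Y4 a b P S 2 2 + Y4 a b P S 3 3 = (1 + S) / 2"
    using assms(2) by (simp add: Y4_def field_simps)
  finally show ?thesis .
qed

definition u1R where "u1R a b S = (\<lambda>i::nat. if i = 0 then 1 else if i = 3 then a/S else if i = 7 then b/S else (0::real))"
definition u2R where "u2R a b S = (\<lambda>i::nat. if i = 4 then 1 else if i = 3 then -b/S else if i = 7 then a/S else (0::real))"
definition R0 where "R0 a b S = (\<lambda>i j. complex_of_real (u1R a b S i * u1R a b S j + u2R a b S i * u2R a b S j))"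

lemma quad_outer:
  fixes u :: "nat \<Rightarrow> real"
  shows "(\<Sum>i<8. \<Sum>j<8. cnj (v i) * of_real (u i * u j) * v j) = cnj (\<Sum>j<8. of_real (u j) * v j) * (\<Sum>j<8. of_real (u j) * v j)"
proof -
  have "cnj (\<Sum>j<8. of_real (u j) * v j) * (\<Sum>j<8. of_real (u j) * v j) = (\<Sum>i<8. cnj (of_real (u i) * v i)) * (\<Sum>j<8. of_real (u j) * v j)"
    by simp
  also have "\<dots> = (\<Sum>i<8. \<Sum>j<8. cnj (of_real (u i) * v i) * (of_real (u j) * v j))"
    by (rule sum_product)
  also have "\<dots> = (\<Sum>i<8. \<Sum>j<8. cnj (v i) * of_real (u i * u j) * v j)"
    by (intro sum.cong refl) (simp add: mult_ac)
  finally show ?thesis by simp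
qed

lemma cnj_mult_nonneg: "0 \<le> cnj (s::complex) * s"
  by (simp add: less_eq_complex_def)

lemma R0_psd: "psd8 (R0 a b S)"
  unfolding psd8_def
proof
  fix v :: "nat \<Rightarrow> complex"
  have e: "\<And>i j. cnj (v i) * R0 a b S i j * v j = cnj (v i) * of_real (u1R a b S i * u1R a b S j) * v j + cnj (v i) * of_real (u2R a b S i * u2R a b S j) * v j"
    by (simp add: R0_def algebra_simps)
  show "0 \<le> (\<Sum>i<8. \<Sum>j<8. cnj (v i) * R0 a b S i j * v j)"
    unfolding e sum.distrib quad_outer
    by (intro add_nonneg_nonneg cnj_mult_nonneg)
qed

lemma R0_ptrace_all:
  fixes a b S :: real
  assumes S: "S > 0" and hS: "S*S = a*a + b*b"
  shows "\<forall>x\<in>{0,1,2,3::nat}. \<forall>y\<in>{0,1,2,3::nat}. ptrace2 (R0 a b S) x y = (if x = y then 1 else 0)"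
proof -
  have Sn: "S \<noteq> 0" using S by simp
  show ?thesis
    apply (simp only: ball_simps)
    apply (simp add: ptrace2_def sum2 R0_def u1R_def u2R_def)
    apply (simp add: field_simps Sn flip: of_real_mult of_real_add)
    apply (use hS in algebra)?
    done
qed

lemma R0_value:
  fixes a b P S :: real
  assumes S: "S > 0" and hS: "S*S = a*a + b*b"
  shows "tr8 (R0 a b S) (\<lambda>i j. of_real (DTR a b P i j)) = of_real ((1 + S) / 2)"
proof -
  have Sn: "S \<noteq> 0" using S by simp
  have "tr8 (R0 a b S) (\<lambda>i j. of_real (DTR a b P i j)) = of_real (\<Sum>i<8. \<Sum>j<8. (u1R a b S i * u1R a b S j + u2R a b S i * u2R a b S j) * DTR a b P j i)"
    by (simp add: tr8_def R0_def)
  also have "(\<Sum>i<8. \<Sum>j<8. (u1R a b S i * u1R a b S j + u2R a b S i * u2R a b S j) * DTR a b P j i) = (1 + S) / 2"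
    unfolding sum8
    apply (simp add: u1R_def u2R_def DTR_def supp_def Tt_def)
    apply (simp add: field_simps Sn)
    apply (use hS in algebra)?
    done
  finally show ?thesis .
qed

lemma G_conds:
  fixes a b P S :: real
  assumes S: "S > 0" and hS: "S*S = a*a + b*b" and P1: "P^2 \<le> 1"
  shows "0 \<le> (S*S - b*a*P)/(8*S)" "0 \<le> (S*S + b*a*P)/(8*S)"
    "(P*a*a/(8*S))^2 \<le> ((S*S - b*a*P)/(8*S)) * ((S*S + b*a*P)/(8*S))"
proof -
  have e1: "S*S - b*a*P = (a - b*P/2)^2 + b^2*(1 - P^2/4)" using hS by (simp add: algebra_simps power2_eq_square)
  have e2: "S*S + b*a*P = (a + b*P/2)^2 + b^2*(1 - P^2/4)" using hS by (simp add: algebra_simps power2_eq_square)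
  have q: "0 \<le> b^2*(1 - P^2/4)" using P1 by simp
  have g1: "0 \<le> S*S - b*a*P" unfolding e1 using q by simp
  have g2: "0 \<le> S*S + b*a*P" unfolding e2 using q by simp
  show "0 \<le> (S*S - b*a*P)/(8*S)" using g1 S by simp
  show "0 \<le> (S*S + b*a*P)/(8*S)" using g2 S by simp
  have key0: "(S*S - b*a*P)*(S*S + b*a*P) - (P*a*a)^2 = (S*S)*(a*a*(1-P^2) + b*b)"
    using hS by algebra
  have "0 \<le> (S*S)*(a*a*(1-P^2) + b*b)" using P1 by simp
  then have key: "(P*a*a)^2 \<le> (S*S - b*a*P)*(S*S + b*a*P)" using key0 by linarith
  have l: "(P*a*a/(8*S))^2 = (P*a*a)^2/((8*S)^2)" by (simp add: power_divide)
  have r: "((S*S - b*a*P)/(8*S)) * ((S*S + b*a*P)/(8*S)) = ((S*S - b*a*P)*(S*S + b*a*P))/((8*S)^2)"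
    by (simp add: power2_eq_square)
  show "(P*a*a/(8*S))^2 \<le> ((S*S - b*a*P)/(8*S)) * ((S*S + b*a*P)/(8*S))"
    unfolding l r by (rule divide_right_mono[OF key]) simp
qed

theorem mainTheorem7:
  fixes n :: nat and \<alpha> :: real
  assumes "n \<ge> 1" and "0 < \<alpha>" and "\<alpha> < pi / (4 * real n)"
  shows "(\<exists>R. AD_feasible R \<and>
            tr8 R (Dop \<alpha> n) = of_real (1/2 + 1/2 * sqrt (1 - (sin (2*\<alpha>) * cos (2 * real n * \<alpha>))^2)))
       \<and> (\<forall>R. AD_feasible R \<longrightarrow>
            Re (tr8 R (Dop \<alpha> n)) \<le> 1/2 + 1/2 * sqrt (1 - (sin (2*\<alpha>) * cos (2 * real n * \<alpha>))^2))"
proof -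
  define p where "p = real n * \<alpha>"
  define a where "a = cos (2*\<alpha>)"
  define P where "P = cos (2 * real n * \<alpha>)"
  define b where "b = sin (2*p) * sin (2*\<alpha>)"
  define S where "S = sqrt (1 - (sin (2*\<alpha>) * P)^2)"
  have P2: "cos (2*p) = P" unfolding p_def P_def by (simp add: mult.assoc)
  have n1: "real n \<ge> 1" using assms(1) by simp
  have "pi / (4 * real n) \<le> pi / 4"
    using n1 by (intro divide_left_mono) auto
  then have a4: "\<alpha> < pi / 4" using assms(3) by linarith
  have c2: "0 < cos (2*\<alpha>)" by (rule cos_gt_zero) (use assms(2) a4 in auto)
  have s2: "0 < sin (2*\<alpha>)" by (rule sin_gt_zero) (use assms(2) a4 in auto)
  have sc: "sin (2*\<alpha>)^2 + cos (2*\<alpha>)^2 = 1" by simp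
  have sin2lt: "sin (2*\<alpha>)^2 < 1" using sc c2 by (simp add: power2_eq_square) (smt (verit) mult_pos_pos)
  have P1: "P^2 \<le> 1" unfolding P_def by (simp add: abs_square_le_1 abs_cos_le_one)
  have "(sin (2*\<alpha>) * P)^2 = sin (2*\<alpha>)^2 * P^2" by (simp add: power_mult_distrib)
  also have "\<dots> \<le> sin (2*\<alpha>)^2" by (rule mult_left_le[OF P1]) simp
  finally have lt: "(sin (2*\<alpha>) * P)^2 < 1" using sin2lt by linarith
  have Spos: "S > 0" unfolding S_def using lt by simp
  have SS: "S*S = 1 - (sin (2*\<alpha>) * P)^2" unfolding S_def using lt by simp
  have sp2: "sin (2*p)^2 + cos (2*p)^2 = 1" by simp
  have hS: "S*S = a*a + b*b"
    unfolding SS a_def b_def using sc sp2 P2 by algebra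
  have Teq: "Tt (cos (2*\<alpha>)) (sin (2*(real n*\<alpha>)) * sin (2*\<alpha>)) (cos (2*(real n*\<alpha>))) = Tt a b P"
    using P2 by (simp add: a_def b_def p_def)
  have hD: "Dop \<alpha> n i j = of_real (DTR a b P i j)" if "i < 8" "j < 8" for i j
    using Dop_eq[OF that, of \<alpha> n] cos_tab[of i j "real n * \<alpha>" \<alpha>] Teq
    by (simp add: DTR_def)
  define g11 where "g11 = (S*S - b*a*P)/(8*S)"
  define g12 where "g12 = P*a*a/(8*S)"
  define g22 where "g22 = (S*S + b*a*P)/(8*S)"
  define cf where "cf = (\<lambda>(x :: nat \<Rightarrow> real) i. complex_of_real (x i))"
  have hY: "complex_of_real (YfR a b P S i j) = Dop \<alpha> n i j
     + Gf g11 g12 g22 (cf (f1R a b S)) (cf (f2R a b S)) i j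
     + Gf (1/8) (P/8) (1/8) (cf (evR 1)) (cf (evR 5)) i j
     + Gf g11 g12 g22 (cf (h1R a b S)) (cf (h2R a b S)) i j
     + Gf (1/8) (P/8) (1/8) (cf (evR 2)) (cf (evR 6)) i j
     + Gf g11 g12 g22 (cf (evR 2)) (cf (evR 6)) i j" if "i < 8" "j < 8" for i j
  proof -
    have im: "i \<in> {0,1,2,3,4,5,6,7}" "j \<in> {0,1,2,3,4,5,6,7}" using that by auto
    have "YfR a b P S i j = DTR a b P i j
     + GfR g11 g12 g22 (f1R a b S) (f2R a b S) i j
     + GfR (1/8) (P/8) (1/8) (evR 1) (evR 5) i j
     + GfR g11 g12 g22 (h1R a b S) (h2R a b S) i j
     + GfR (1/8) (P/8) (1/8) (evR 2) (evR 6) i j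
     + GfR g11 g12 g22 (evR 2) (evR 6) i j"
      using certR_all[OF Spos hS, of P] im unfolding g11_def g12_def g22_def by blast
    then show ?thesis unfolding cf_def Gf_ofreal by (simp add: hD[OF that])
  qed
  have hTr: "tr8 R (\<lambda>i j. complex_of_real (YfR a b P S i j)) = tr8 R (Dop \<alpha> n)
     + tr8 R (Gf g11 g12 g22 (cf (f1R a b S)) (cf (f2R a b S)))
     + tr8 R (Gf (1/8) (P/8) (1/8) (cf (evR 1)) (cf (evR 5)))
     + tr8 R (Gf g11 g12 g22 (cf (h1R a b S)) (cf (h2R a b S)))
     + tr8 R (Gf (1/8) (P/8) (1/8) (cf (evR 2)) (cf (evR 6)))
     + tr8 R (Gf g11 g12 g22 (cf (evR 2)) (cf (evR 6)))" for R
    by (subst tr8_cong[OF hY]) (simp_all only: tr8_add)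
  have val: "1/2 + 1/2 * sqrt (1 - (sin (2*\<alpha>) * cos (2 * real n * \<alpha>))^2) = (1 + S) / 2"
    unfolding S_def P_def by simp
  have Gc: "0 \<le> g11" "0 \<le> g22" "g12^2 \<le> g11 * g22"
    using G_conds[OF Spos hS P1] unfolding g11_def g12_def g22_def by auto
  have Dc: "(0::real) \<le> 1/8" "(P/8)^2 \<le> 1/8 * (1/8)" using P1 by (simp_all add: power_divide)
  show ?thesis
  proof
    show "\<exists>R. AD_feasible R \<and>
            tr8 R (Dop \<alpha> n) = of_real (1/2 + 1/2 * sqrt (1 - (sin (2*\<alpha>) * cos (2 * real n * \<alpha>))^2))"
    proof (intro exI conjI)
      have pt: "\<forall>x<4. \<forall>y<4. ptrace2 (R0 a b S) x y = (if x = y then 1 else 0)"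
      proof (intro allI impI)
        fix x y :: nat assume "x < 4" "y < 4"
        then have "x \<in> {0,1,2,3}" "y \<in> {0,1,2,3}" by auto
        then show "ptrace2 (R0 a b S) x y = (if x = y then 1 else 0)"
          using R0_ptrace_all[OF Spos hS] by blast
      qed
      show "AD_feasible (R0 a b S)" unfolding AD_feasible_def using R0_psd pt by blast
      have "tr8 (R0 a b S) (Dop \<alpha> n) = tr8 (R0 a b S) (\<lambda>i j. of_real (DTR a b P i j))"
        by (rule tr8_cong) (rule hD)
      also have "\<dots> = of_real ((1 + S) / 2)" by (rule R0_value[OF Spos hS])
      finally show "tr8 (R0 a b S) (Dop \<alpha> n) = of_real (1/2 + 1/2 * sqrt (1 - (sin (2*\<alpha>) * cos (2 * real n * \<alpha>))^2))"
        unfolding val .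
    qed
  next
    show "\<forall>R. AD_feasible R \<longrightarrow>
            Re (tr8 R (Dop \<alpha> n)) \<le> 1/2 + 1/2 * sqrt (1 - (sin (2*\<alpha>) * cos (2 * real n * \<alpha>))^2)"
    proof (intro allI impI)
      fix R assume F: "AD_feasible R"
      then have ps: "psd8 R" unfolding AD_feasible_def by blast
      have t1: "0 \<le> Re (tr8 R (Gf g11 g12 g22 (cf (f1R a b S)) (cf (f2R a b S))))"
        by (rule Gf_nonneg[OF ps Gc])
      have t2: "0 \<le> Re (tr8 R (Gf (1/8) (P/8) (1/8) (cf (evR 1)) (cf (evR 5))))"
        by (rule Gf_nonneg[OF ps Dc(1) Dc(1) Dc(2)])
      have t3: "0 \<le> Re (tr8 R (Gf g11 g12 g22 (cf (h1R a b S)) (cf (h2R a b S))))"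
        by (rule Gf_nonneg[OF ps Gc])
      have t4: "0 \<le> Re (tr8 R (Gf (1/8) (P/8) (1/8) (cf (evR 2)) (cf (evR 6))))"
        by (rule Gf_nonneg[OF ps Dc(1) Dc(1) Dc(2)])
      have t5: "0 \<le> Re (tr8 R (Gf g11 g12 g22 (cf (evR 2)) (cf (evR 6))))"
        by (rule Gf_nonneg[OF ps Gc])
      have "Re (tr8 R (\<lambda>i j. complex_of_real (YfR a b P S i j))) = (1 + S) / 2"
        unfolding trY_feas[OF F Spos] by simp
      then have "(1 + S) / 2 = Re (tr8 R (Dop \<alpha> n))
         + Re (tr8 R (Gf g11 g12 g22 (cf (f1R a b S)) (cf (f2R a b S))))
         + Re (tr8 R (Gf (1/8) (P/8) (1/8) (cf (evR 1)) (cf (evR 5))))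
         + Re (tr8 R (Gf g11 g12 g22 (cf (h1R a b S)) (cf (h2R a b S))))
         + Re (tr8 R (Gf (1/8) (P/8) (1/8) (cf (evR 2)) (cf (evR 6))))
         + Re (tr8 R (Gf g11 g12 g22 (cf (evR 2)) (cf (evR 6))))"
        unfolding hTr by simp
      then show "Re (tr8 R (Dop \<alpha> n)) \<le> 1/2 + 1/2 * sqrt (1 - (sin (2*\<alpha>) * cos (2 * real n * \<alpha>))^2)"
        unfolding val using t1 t2 t3 t4 t5 by linarith
    qed
  qed
qed

end
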